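(* Let $A\in\mathbb{C}^{m\times n}$. Then the following are equivalent: (1) $A^{\mathfrak{m}}$ exists; (2) there exists $X\in\mathbb{C}^{m\times m}$ such that $A=XAA^{\sim}A$; (3) there exists $Y\in\mathbb{C}^{n\times n}$ such that $A=AA^{\sim}AY$. In this case, for any such $X$ and $Y$, $A^{\mathfrak{m}}=(XA)^{\sim}=(AY)^{\sim}$.
   Context: For a positive integer $k$, the Minkowski metric matrix of order $k$ is $G_k=\mathrm{diag}(1,-I_{k-1})$ (with $G_1=(1)$). For $A\in\mathbb{C}^{m\times n}$, the Minkowski adjoint is $A^{\sim}=G_nA^*G_m$, where $A^*$ is the conjugate transpose. The Minkowski inverse of $A$, denoted $A^{\mathfrak{m}}$, is a matrix $Z\in\mathbb{C}^{n\times m}$ with $AZA=A$, $ZAZ=Z$, $(AZ)^{\sim}=AZ$, $(ZA)^{\sim}=ZA$ (unique if it exists). *)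

theory Defs
  imports "Jordan_Normal_Form.Matrix" Complex_Main
begin

definition conj_transpose :: "complex mat \<Rightarrow> complex mat" where
  "conj_transpose A = mat (dim_col A) (dim_row A) (\<lambda>(i,j). cnj (A $$ (j,i)))"

definition minkowski_G :: "nat \<Rightarrow> complex mat" where
  "minkowski_G k = mat k k (\<lambda>(i,j). if i = j then (if i = 0 then 1 else -1) else 0)"

definition minkowski_adjoint :: "complex mat \<Rightarrow> complex mat" where
  "minkowski_adjoint A = minkowski_G (dim_col A) * conj_transpose A * minkowski_G (dim_row A)"

definition is_minkowski_inverse :: "complex mat \<Rightarrow> complex mat \<Rightarrow> bool" where
  "is_minkowski_inverse A Z \<longleftrightarrow>
     Z \<in> carrier_mat (dim_col A) (dim_row A) \<and>
     A * Z * A = A \<and> Z * A * Z = Z \<and>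
     minkowski_adjoint (A * Z) = A * Z \<and> minkowski_adjoint (Z * A) = Z * A"

definition minkowski_inverse_exists :: "complex mat \<Rightarrow> bool" where
  "minkowski_inverse_exists A \<longleftrightarrow> (\<exists>Z. is_minkowski_inverse A Z)"

end

theory Submission
  imports Defs
begin


lemma assoc': "dim_col (A::complex mat) = dim_row B \<Longrightarrow> dim_col B = dim_row C \<Longrightarrow> A*B*C = A*(B*C)"
  by (rule assoc_mult_mat[of A "dim_row A" "dim_col A" B "dim_col B" C "dim_col C"]) auto

lemma dimG[simp]: "dim_row (minkowski_G k) = k" "dim_col (minkowski_G k) = k"
  by (auto simp: minkowski_G_def)

lemma dimCT[simp]: "dim_row (conj_transpose A) = dim_col A" "dim_col (conj_transpose A) = dim_row A"
  by (auto simp: conj_transpose_def)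

lemma dimM[simp]: "dim_row (minkowski_adjoint A) = dim_col A" "dim_col (minkowski_adjoint A) = dim_row A"
  by (auto simp: minkowski_adjoint_def)

lemma GG: "minkowski_G k * minkowski_G k = 1\<^sub>m k"
proof (rule eq_matI)
  fix i j assume ij: "i < dim_row (1\<^sub>m k)" "j < dim_col (1\<^sub>m k)"
  hence "(minkowski_G k * minkowski_G k) $$ (i,j) = (\<Sum>l<k. minkowski_G k $$ (i,l) * minkowski_G k $$ (l,j))"
    by (simp add: scalar_prod_def row_def col_def atLeast0LessThan)
  also have "\<dots> = (\<Sum>l\<in>{i}. minkowski_G k $$ (i,l) * minkowski_G k $$ (l,j))"
    using ij by (intro sum.mono_neutral_right) (auto simp: minkowski_G_def)
  also have "\<dots> = 1\<^sub>m k $$ (i,j)" using ij by (auto simp: minkowski_G_def)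
  finally show "(minkowski_G k * minkowski_G k) $$ (i,j) = 1\<^sub>m k $$ (i,j)" .
qed auto

lemma CTCT[simp]: "conj_transpose (conj_transpose A) = A"
  by (rule eq_matI) (auto simp: conj_transpose_def)

lemma CTG[simp]: "conj_transpose (minkowski_G k) = minkowski_G k"
  by (rule eq_matI) (auto simp: conj_transpose_def minkowski_G_def)

lemma CT_mult: "dim_col A = dim_row B \<Longrightarrow> conj_transpose (A * B) = conj_transpose B * conj_transpose A"
  by (rule eq_matI) (auto simp: conj_transpose_def scalar_prod_def cnj_sum mult.commute)

lemma M_mult: assumes "dim_col A = dim_row B"
  shows "minkowski_adjoint (A * B) = minkowski_adjoint B * minkowski_adjoint A"
proof -
  let ?G = minkowski_G and ?C = conj_transpose
  have "minkowski_adjoint B * minkowski_adjoint A = ?G (dim_col B) * ?C B * (?G (dim_row B) * ?G (dim_col A)) * ?C A * ?G (dim_row A)"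
    using assms by (simp add: minkowski_adjoint_def assoc')
  also have "\<dots> = ?G (dim_col B) * ?C B * ?C A * ?G (dim_row A)"
    using assms by (simp add: GG assoc')
  also have "\<dots> = minkowski_adjoint (A * B)"
    using assms by (simp add: minkowski_adjoint_def CT_mult assoc')
  finally show ?thesis ..
qed

lemma MM[simp]: "minkowski_adjoint (minkowski_adjoint A) = A"
proof -
  let ?G = minkowski_G and ?C = conj_transpose
  have "minkowski_adjoint (minkowski_adjoint A) = (?G (dim_row A) * ?G (dim_row A)) * A * (?G (dim_col A) * ?G (dim_col A))"
    by (simp add: minkowski_adjoint_def CT_mult assoc')
  also have "\<dots> = A" by (simp add: GG)
  finally show ?thesis .
qed


lemma L3:
  assumes A: "A \<in> carrier_mat m n" and X: "X \<in> carrier_mat m m"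
    and H: "A = X * A * minkowski_adjoint A * A"
  shows "is_minkowski_inverse A (minkowski_adjoint (X * A))"
proof -
  define Ad where "Ad = minkowski_adjoint A"
  define Xd where "Xd = minkowski_adjoint X"
  have d[simp]: "dim_row A = m" "dim_col A = n" "dim_row X = m" "dim_col X = m"
    "dim_row Ad = n" "dim_col Ad = m" "dim_row Xd = m" "dim_col Xd = m"
    using A X by (auto simp: Ad_def Xd_def)
  have Hr: "X*(A*(Ad*A)) = A" using H by (simp add: assoc' Ad_def)
  have "Ad = minkowski_adjoint (X * A * Ad * A)" unfolding Ad_def by (rule arg_cong[OF H])
  also have "\<dots> = Ad*(A*(Ad*Xd))" by (simp add: M_mult assoc' Ad_def Xd_def)
  finally have h1r: "Ad*(A*(Ad*Xd)) = Ad" ..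
  have h2: "X*(A*Ad) = A*(Ad*Xd)"
  proof -
    have "X*(A*Ad) = X*(A*(Ad*(A*(Ad*Xd))))" by (simp only: h1r)
    also have "\<dots> = (X*(A*(Ad*A)))*(Ad*Xd)" by (simp add: assoc')
    also have "\<dots> = A*(Ad*Xd)" by (simp only: Hr)
    finally show ?thesis .
  qed
  have h4r: "A*(Ad*(Xd*A)) = A"
  proof -
    have "A*(Ad*(Xd*A)) = (A*(Ad*Xd))*A" by (simp add: assoc')
    also have "\<dots> = (X*(A*Ad))*A" by (simp only: h2)
    also have "\<dots> = X*(A*(Ad*A))" by (simp add: assoc')
    also have "\<dots> = A" by (rule Hr)
    finally show ?thesis .
  qed
  have "Ad = minkowski_adjoint (A*(Ad*(Xd*A)))" using h4r by (simp add: Ad_def)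
  also have "\<dots> = Ad*(X*(A*Ad))" by (simp add: M_mult assoc' Ad_def Xd_def)
  finally have h5r: "Ad*(X*(A*Ad)) = Ad" ..
  have S1: "Ad*(Xd*(A*Ad)) = Ad"
  proof -
    have "Ad*(Xd*(A*Ad)) = (Ad*(X*(A*Ad)))*(Xd*(A*Ad))" by (simp only: h5r)
    also have "\<dots> = Ad*(X*((A*(Ad*(Xd*A)))*Ad))" by (simp add: assoc')
    also have "\<dots> = Ad*(X*(A*Ad))" by (simp only: h4r)
    also have "\<dots> = Ad" by (rule h5r)
    finally show ?thesis .
  qed
  have "A = minkowski_adjoint (Ad*(Xd*(A*Ad)))" using S1 by (simp add: Ad_def)
  also have "\<dots> = A*(Ad*(X*A))" by (simp add: M_mult assoc' Ad_def Xd_def)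
  finally have S1'r: "A*(Ad*(X*A)) = A" ..
  have Z: "minkowski_adjoint (X * A) = Ad * Xd" by (simp add: M_mult Ad_def Xd_def)
  have c1: "A * (Ad*Xd) * A = A" using h4r by (simp add: assoc')
  have c2: "Ad*Xd * A * (Ad*Xd) = Ad*Xd"
  proof -
    have "Ad*Xd * A * (Ad*Xd) = (Ad*(Xd*(A*Ad)))*Xd" by (simp add: assoc')
    also have "\<dots> = Ad*Xd" by (simp only: S1)
    finally show ?thesis .
  qed
  have c3: "minkowski_adjoint (A * (Ad*Xd)) = A * (Ad*Xd)"
  proof -
    have "minkowski_adjoint (A * (Ad*Xd)) = X*(A*Ad)" by (simp add: M_mult assoc' Ad_def Xd_def)
    then show ?thesis using h2 by simp
  qed
  have c4: "minkowski_adjoint (Ad*Xd*A) = Ad*Xd*A"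
  proof -
    have "minkowski_adjoint (Ad*Xd*A) = Ad*(X*A)" by (simp add: M_mult assoc' Ad_def Xd_def)
    also have "\<dots> = (Ad*(Xd*(A*Ad)))*(X*A)" by (simp only: S1)
    also have "\<dots> = Ad*(Xd*(A*(Ad*(X*A))))" by (simp add: assoc')
    also have "\<dots> = Ad*(Xd*A)" by (simp only: S1'r)
    also have "\<dots> = Ad*Xd*A" by (simp add: assoc')
    finally show ?thesis .
  qed
  have t1: "Ad*Xd \<in> carrier_mat (dim_col A) (dim_row A)"
    unfolding carrier_mat_def mem_Collect_eq index_mult_mat(2,3) d by (rule conjI refl)+
  show ?thesis unfolding Z is_minkowski_inverse_def using t1 c1 c2 c3 c4 by blast
qed

lemma adj_inv:
  assumes "is_minkowski_inverse A Z"
  shows "is_minkowski_inverse (minkowski_adjoint A) (minkowski_adjoint Z)"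
proof -
  have Z: "dim_row Z = dim_col A" "dim_col Z = dim_row A" and P: "A * Z * A = A" "Z * A * Z = Z"
    "minkowski_adjoint (A * Z) = A * Z" "minkowski_adjoint (Z * A) = Z * A"
    using assms by (auto simp: is_minkowski_inverse_def)
  have "minkowski_adjoint A * minkowski_adjoint Z * minkowski_adjoint A = minkowski_adjoint (A * Z * A)"
    using Z by (simp add: M_mult assoc')
  moreover have "minkowski_adjoint Z * minkowski_adjoint A * minkowski_adjoint Z = minkowski_adjoint (Z * A * Z)"
    using Z by (simp add: M_mult assoc')
  moreover have "minkowski_adjoint A * minkowski_adjoint Z = minkowski_adjoint (Z * A)"
    using Z by (simp add: M_mult)
  moreover have "minkowski_adjoint Z * minkowski_adjoint A = minkowski_adjoint (A * Z)"
    using Z by (simp add: M_mult)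
  moreover have "minkowski_adjoint Z \<in> carrier_mat (dim_col (minkowski_adjoint A)) (dim_row (minkowski_adjoint A))"
    unfolding carrier_mat_def mem_Collect_eq dimM Z by (rule conjI refl)+
  ultimately show ?thesis using P unfolding is_minkowski_inverse_def by simp
qed

lemma L12:
  assumes A: "A \<in> carrier_mat m n" and I: "is_minkowski_inverse A Z"
  shows "\<exists>X \<in> carrier_mat m m. A = X * A * minkowski_adjoint A * A"
proof -
  define Ad where "Ad = minkowski_adjoint A"
  define Zd where "Zd = minkowski_adjoint Z"
  have d[simp]: "dim_row A = m" "dim_col A = n" "dim_row Z = n" "dim_col Z = m"
    "dim_row Ad = n" "dim_col Ad = m" "dim_row Zd = m" "dim_col Zd = n"
    using A I by (auto simp: Ad_def Zd_def is_minkowski_inverse_def)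
  have P1: "A*(Z*A) = A" and P2: "Z*(A*Z) = Z" and P3: "minkowski_adjoint (A * Z) = A * Z"
    and P4: "minkowski_adjoint (Z * A) = Z * A"
    using I by (auto simp: is_minkowski_inverse_def assoc')
  have P4': "Ad*Zd = Z*A" using P4 by (simp add: M_mult Ad_def Zd_def)
  have P3': "Zd*Ad = A*Z" using P3 by (simp add: M_mult Ad_def Zd_def)
  have "Zd = minkowski_adjoint (Z*(A*Z))" using P2 by (simp add: Zd_def)
  also have "\<dots> = Zd*(Ad*Zd)" by (simp add: M_mult assoc' Ad_def Zd_def)
  finally have P2'r: "Zd*(Ad*Zd) = Zd" ..
  have "Zd * Z * A * Ad * A = Zd*(Z*A)*(Ad*A)" by (simp add: assoc')
  also have "\<dots> = Zd*(Ad*Zd)*(Ad*A)" by (simp only: P4')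
  also have "\<dots> = (Zd*Ad)*A" by (simp only: P2'r) (simp add: assoc')
  also have "\<dots> = A*(Z*A)" by (simp only: P3') (simp add: assoc')
  also have "\<dots> = A" by (rule P1)
  finally have eq: "A = Zd * Z * A * Ad * A" ..
  have c: "Zd * Z \<in> carrier_mat m m"
    unfolding carrier_mat_def mem_Collect_eq index_mult_mat(2,3) d by (rule conjI refl)+
  show ?thesis unfolding Ad_def[symmetric] using eq c by blast
qed


lemma L12': "A \<in> carrier_mat m n \<Longrightarrow> minkowski_inverse_exists A \<Longrightarrow>
   \<exists>Y \<in> carrier_mat n n. A = A * minkowski_adjoint A * A * Y"
proof -
  assume A: "A \<in> carrier_mat m n" and E: "minkowski_inverse_exists A"
  then obtain Z where Z: "is_minkowski_inverse A Z" unfolding minkowski_inverse_exists_def by blast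
  have "is_minkowski_inverse (minkowski_adjoint A) (minkowski_adjoint Z)" by (rule adj_inv[OF Z])
  moreover have "minkowski_adjoint A \<in> carrier_mat n m" using A by (intro carrier_matI) auto
  ultimately obtain X where X: "X \<in> carrier_mat n n"
    and H: "minkowski_adjoint A = X * minkowski_adjoint A * minkowski_adjoint (minkowski_adjoint A) * minkowski_adjoint A"
    using L12 by blast
  have dA: "dim_row A = m" "dim_col A = n" "dim_row X = n" "dim_col X = n" using A X by auto
  have "A = minkowski_adjoint (minkowski_adjoint A)" by simp
  also have "\<dots> = minkowski_adjoint (X * minkowski_adjoint A * minkowski_adjoint (minkowski_adjoint A) * minkowski_adjoint A)"
    by (rule arg_cong[OF H])
  also have "\<dots> = A * minkowski_adjoint A * A * minkowski_adjoint X"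
    using dA by (simp add: M_mult assoc')
  finally have "A = A * minkowski_adjoint A * A * minkowski_adjoint X" .
  moreover have "minkowski_adjoint X \<in> carrier_mat n n"
    by (intro carrier_matI) (simp_all add: dA)
  ultimately show ?thesis by blast
qed

lemma L4:
  assumes A: "A \<in> carrier_mat m n" and Y: "Y \<in> carrier_mat n n"
    and H: "A = A * minkowski_adjoint A * A * Y"
  shows "is_minkowski_inverse A (minkowski_adjoint (A * Y))"
proof -
  have dA: "dim_row A = m" "dim_col A = n" "dim_row Y = n" "dim_col Y = n" using A Y by auto
  have "minkowski_adjoint A = minkowski_adjoint (A * minkowski_adjoint A * A * Y)"
    by (rule arg_cong[OF H])
  also have "\<dots> = minkowski_adjoint Y * minkowski_adjoint A * minkowski_adjoint (minkowski_adjoint A) * minkowski_adjoint A"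
    using dA by (simp add: M_mult assoc')
  finally have H': "minkowski_adjoint A = minkowski_adjoint Y * minkowski_adjoint A * minkowski_adjoint (minkowski_adjoint A) * minkowski_adjoint A" .
  have "minkowski_adjoint A \<in> carrier_mat n m" "minkowski_adjoint Y \<in> carrier_mat n n"
    by (intro carrier_matI; simp add: dA)+
  from L3[OF this H'] have "is_minkowski_inverse (minkowski_adjoint A) (minkowski_adjoint (minkowski_adjoint Y * minkowski_adjoint A))" .
  moreover have "minkowski_adjoint (minkowski_adjoint Y * minkowski_adjoint A) = A * Y"
    using dA by (simp add: M_mult)
  ultimately have "is_minkowski_inverse (minkowski_adjoint A) (A * Y)" by simp
  from adj_inv[OF this] show ?thesis by simp
qed

theorem theorem6p1:
  fixes A :: "complex mat" and m n :: nat
  assumes "A \<in> carrier_mat m n"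
  shows "(minkowski_inverse_exists A \<longleftrightarrow>
            (\<exists>X \<in> carrier_mat m m. A = X * A * minkowski_adjoint A * A)) \<and>
         (minkowski_inverse_exists A \<longleftrightarrow>
            (\<exists>Y \<in> carrier_mat n n. A = A * minkowski_adjoint A * A * Y)) \<and>
         (\<forall>X \<in> carrier_mat m m. A = X * A * minkowski_adjoint A * A \<longrightarrow>
               is_minkowski_inverse A (minkowski_adjoint (X * A))) \<and>
         (\<forall>Y \<in> carrier_mat n n. A = A * minkowski_adjoint A * A * Y \<longrightarrow>
               is_minkowski_inverse A (minkowski_adjoint (A * Y)))"
proof -
  have p3: "\<forall>X \<in> carrier_mat m m. A = X * A * minkowski_adjoint A * A \<longrightarrow>
               is_minkowski_inverse A (minkowski_adjoint (X * A))"
    using L3[OF assms] by blast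
  have p4: "\<forall>Y \<in> carrier_mat n n. A = A * minkowski_adjoint A * A * Y \<longrightarrow>
               is_minkowski_inverse A (minkowski_adjoint (A * Y))"
    using L4[OF assms] by blast
  have p1: "minkowski_inverse_exists A \<longleftrightarrow>
            (\<exists>X \<in> carrier_mat m m. A = X * A * minkowski_adjoint A * A)"
    using p3 L12[OF assms] unfolding minkowski_inverse_exists_def by blast
  have p2: "minkowski_inverse_exists A \<longleftrightarrow>
            (\<exists>Y \<in> carrier_mat n n. A = A * minkowski_adjoint A * A * Y)"
    using p4 L12'[OF assms] unfolding minkowski_inverse_exists_def by blast
  show ?thesis using p1 p2 p3 p4 by blast
qed

end
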